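(* Let $(x,y)$ be a random pair with values in $\mathcal{X}\times\{-1,+1\}$ with some distribution $P$ (so $\Pr\{x\in\mathcal{X}\}=1$). Let $f_\theta:\mathcal{X}\times\mathbb{R}\to\mathbb{R}$ satisfy the scalable-classifier assumption, and let $\bar\rho(x)$ denote the unique solution of $f_\theta(x,\bar\rho(x))=0$. Let $\mathcal{Z}_c=\{(x_i,y_i)\}_{i=1}^{n_c}$ be $n_c$ i.i.d. samples from $P$. Let $\varepsilon,\delta\in(0,1)$ and let $r$ be an integer with $1\le r\le n_c$ and $$\mathbf{B}(r-1;n_c,\varepsilon)\le\delta.$$ Let $\{\tilde x^U_j\}_{j=1}^{n_U}$ be the feature vectors of all samples in $\mathcal{Z}_c$ with label $-1$ (listed with multiplicity), define, when $n_U\ge r$, $$\rho_\varepsilon=\max{}^{(r)}\big(\{\bar\rho(\tilde x^U_j)\}_{j=1}^{n_U}\big),$$ and define $\mathcal{S}_\varepsilon=\{x\in\mathcal{X}: f_\theta(x,\rho_\varepsilon)<0\}$ if $n_U\ge r$ and $\mathcal{S}_\varepsilon=\mathcal{X}$ otherwise. Then, with probability at least $1-\delta$ with respect to the draw of $\mathcal{Z}_c$, $$\Pr_{(x,y)\sim P}\{y=-1\ \text{and}\ x\in\mathcal{S}_\varepsilon\}\le\varepsilon,$$ where $(x,y)$ is drawn independently of $\mathcal{Z}_c$.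
   Context: Scalable-classifier assumption: for every $x\in\mathcal{X}$, the map $\rho\mapsto f_\theta(x,\rho)$ is continuous and strictly increasing, and $\lim_{\rho\to-\infty}f_\theta(x,\rho)<0<\lim_{\rho\to+\infty}f_\theta(x,\rho)$ (under this assumption $\bar\rho(x)$ exists and is unique). Binomial CDF: $\mathbf{B}(k;n,\varepsilon)=\sum_{i=0}^{k}\binom{n}{i}\varepsilon^i(1-\varepsilon)^{n-i}$. Generalized max: for a finite collection $\Gamma=\{\gamma_i\}_{i=1}^n$ of reals and integer $r\in\{1,\dots,n\}$, order it as $\gamma_{(1)}\ge\gamma_{(2)}\ge\dots\ge\gamma_{(n)}$ and set $\max^{(r)}(\Gamma)=\gamma_{(r)}$ (the $r$-th largest value, counting multiplicity). *)

theory Defs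
  imports "HOL-Probability.Probability"
begin

definition binom_cdf :: "nat \<Rightarrow> nat \<Rightarrow> real \<Rightarrow> real" where
  "binom_cdf k n eps = (\<Sum>i=0..k. real (n choose i) * eps ^ i * (1 - eps) ^ (n - i))"

definition gen_max :: "nat \<Rightarrow> real list \<Rightarrow> real" where
  "gen_max r xs = rev (sort xs) ! (r - 1)"

definition scalable_classifier :: "'a set \<Rightarrow> ('a \<Rightarrow> real \<Rightarrow> real) \<Rightarrow> bool" where
  "scalable_classifier X f \<longleftrightarrow>
     (\<forall>x\<in>X. continuous_on UNIV (f x) \<and> strict_mono (f x) \<and>
        Lim at_bot (\<lambda>\<rho>. ereal (f x \<rho>)) < 0 \<and> 0 < Lim at_top (\<lambda>\<rho>. ereal (f x \<rho>)))"

definition rho_bar :: "('a \<Rightarrow> real \<Rightarrow> real) \<Rightarrow> 'a \<Rightarrow> real" where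
  "rho_bar f x = (THE \<rho>. f x \<rho> = 0)"

definition neg_features :: "nat \<Rightarrow> (nat \<Rightarrow> 'a \<times> int) \<Rightarrow> 'a list" where
  "neg_features nc Z = map (\<lambda>i. fst (Z i)) (filter (\<lambda>i. snd (Z i) = -1) [0..<nc])"

definition S_eps :: "'a set \<Rightarrow> ('a \<Rightarrow> real \<Rightarrow> real) \<Rightarrow> nat \<Rightarrow> nat \<Rightarrow> (nat \<Rightarrow> 'a \<times> int) \<Rightarrow> 'a set" where
  "S_eps X f r nc Z =
     (if length (neg_features nc Z) \<ge> r
      then {x\<in>X. f x (gen_max r (map (rho_bar f) (neg_features nc Z))) < 0}
      else X)"

end

theory Submission
  imports Defs
begin


definition GG :: "nat \<Rightarrow> nat \<Rightarrow> real \<Rightarrow> real" where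
  "GG n k p = (\<Sum>S\<in>{S. S \<subseteq> {..<n} \<and> card S \<le> k}. p ^ card S * (1 - p) ^ (n - card S))"

lemma fin_subs: "finite {S. S \<subseteq> {..<n::nat} \<and> Q S}"
  by (rule finite_subset[of _ "Pow {..<n}"]) auto

lemma GG_Suc:
  "GG (Suc n) k p = (1 - p) * GG n k p + p * (if k = 0 then 0 else GG n (k - 1) p)"
proof -
  let ?t = "\<lambda>m S. p ^ card S * (1 - p) ^ (m - card S)"
  let ?A = "{S. S \<subseteq> {..<n} \<and> card S \<le> k}"
  let ?B = "{S. S \<subseteq> {..<n} \<and> Suc (card S) \<le> k}"
  have split: "{S. S \<subseteq> {..<Suc n} \<and> card S \<le> k} = ?A \<union> insert n ` ?B"
  proof (intro equalityI subsetI)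
    fix S assume "S \<in> {S. S \<subseteq> {..<Suc n} \<and> card S \<le> k}"
    hence S: "S \<subseteq> {..<Suc n}" "card S \<le> k" by auto
    show "S \<in> ?A \<union> insert n ` ?B"
    proof (cases "n \<in> S")
      case True
      have fin: "finite S" using S(1) finite_subset by blast
      have "S = insert n (S - {n})" using True by auto
      moreover have "S - {n} \<in> ?B" using S True fin
        by (auto simp: card_Diff_singleton) (metis One_nat_def Suc_pred card_gt_0_iff empty_iff less_Suc_eq)
      ultimately show ?thesis by blast
    next
      case False
      then show ?thesis using S by (auto simp: less_Suc_eq)
    qed
  next
    fix S assume "S \<in> ?A \<union> insert n ` ?B"
    then show "S \<in> {S. S \<subseteq> {..<Suc n} \<and> card S \<le> k}"
    proof
      assume "S \<in> ?A" then show ?thesis by auto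
    next
      assume "S \<in> insert n ` ?B"
      then obtain T where T: "T \<in> ?B" "S = insert n T" by auto
      have "finite T" using T(1) finite_subset by auto
      moreover have "n \<notin> T" using T(1) by auto
      ultimately show ?thesis using T by auto
    qed
  qed
  have disj: "?A \<inter> insert n ` ?B = {}" by auto
  have inj: "inj_on (insert n) ?B"
    unfolding inj_on_def by auto
  have "GG (Suc n) k p = sum (?t (Suc n)) ?A + sum (?t (Suc n)) (insert n ` ?B)"
    unfolding GG_def split by (rule sum.union_disjoint) (auto intro: fin_subs)
  also have "sum (?t (Suc n)) (insert n ` ?B) = sum (?t (Suc n) \<circ> insert n) ?B"
    by (rule sum.reindex[OF inj])
  also have "\<dots> = sum (\<lambda>S. p * ?t n S) ?B"
  proof (rule sum.cong)
    fix S assume S: "S \<in> ?B"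
    have fin: "finite S" using S finite_subset by auto
    have "n \<notin> S" using S by auto
    moreover have "card S \<le> n" using S card_mono[of "{..<n}" S] by auto
    ultimately show "(?t (Suc n) \<circ> insert n) S = p * ?t n S" using fin by simp
  qed simp
  also have "sum (?t (Suc n)) ?A = sum (\<lambda>S. (1-p) * ?t n S) ?A"
  proof (rule sum.cong)
    fix S assume S: "S \<in> ?A"
    have "card S \<le> n" using S card_mono[of "{..<n}" S] by auto
    then show "?t (Suc n) S = (1-p) * ?t n S" by (simp add: Suc_diff_le)
  qed simp
  also have "sum (\<lambda>S. p * ?t n S) ?B = p * (if k = 0 then 0 else GG n (k - 1) p)"
  proof (cases k)
    case 0 then show ?thesis by simp
  next
    case (Suc k')
    then have "?B = {S. S \<subseteq> {..<n} \<and> card S \<le> k - 1}" by auto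
    then show ?thesis using Suc by (simp add: GG_def sum_distrib_left)
  qed
  finally show ?thesis by (simp add: GG_def sum_distrib_left)
qed

lemma GG_nonneg: "0 \<le> p \<Longrightarrow> p \<le> 1 \<Longrightarrow> 0 \<le> GG n k p"
  unfolding GG_def by (intro sum_nonneg) auto

lemma GG_mono_k: "0 \<le> p \<Longrightarrow> p \<le> 1 \<Longrightarrow> k \<le> k' \<Longrightarrow> GG n k p \<le> GG n k' p"
  unfolding GG_def by (intro sum_mono2 fin_subs) auto

lemma GG_anti: "0 \<le> q \<Longrightarrow> q \<le> p \<Longrightarrow> p \<le> 1 \<Longrightarrow> GG n k p \<le> GG n k q"
proof (induction n arbitrary: k)
  case 0
  then show ?case by (simp add: GG_def)
next
  case (Suc n)
  define H where "H = (\<lambda>x. if k = 0 then 0 else GG n (k - 1) x)"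
  have HG: "H q \<le> GG n k q" unfolding H_def using Suc.prems GG_mono_k[of q "k-1" k n] GG_nonneg[of q n k]
    by auto
  have H: "H p \<le> H q" unfolding H_def using Suc by auto
  have G: "GG n k p \<le> GG n k q" using Suc by auto
  have "GG (Suc n) k p = (1-p) * GG n k p + p * H p" by (simp add: GG_Suc H_def)
  also have "\<dots> \<le> (1-p) * GG n k q + p * H q"
    using Suc.prems H G by (intro add_mono mult_left_mono) auto
  also have "\<dots> = GG n k q - p * (GG n k q - H q)" by (simp add: algebra_simps)
  also have "\<dots> \<le> GG n k q - q * (GG n k q - H q)"
    using HG Suc.prems by (intro diff_left_mono mult_right_mono) auto
  also have "\<dots> = GG (Suc n) k q" by (simp add: GG_Suc H_def algebra_simps)
  finally show ?case .
qed

lemma GG_binom: "GG n k p = binom_cdf k n p"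
proof -
  let ?S = "{S. S \<subseteq> {..<n} \<and> card S \<le> k}"
  have "GG n k p = (\<Sum>j\<in>{0..k}. \<Sum>S\<in>{S \<in> ?S. card S = j}. p ^ card S * (1 - p) ^ (n - card S))"
    unfolding GG_def by (rule sum.group[symmetric]) (auto intro: fin_subs)
  also have "\<dots> = (\<Sum>j\<in>{0..k}. real (n choose j) * p ^ j * (1 - p) ^ (n - j))"
  proof (rule sum.cong)
    fix j assume j: "j \<in> {0..k}"
    have e: "{S \<in> ?S. card S = j} = {S. S \<subseteq> {..<n} \<and> card S = j}" using j by auto
    have "card {S. S \<subseteq> {..<n} \<and> card S = j} = n choose j"
      using n_subsets[of "{..<n}" j] by simp
    then show "(\<Sum>S\<in>{S \<in> ?S. card S = j}. p ^ card S * (1 - p) ^ (n - card S)) = real (n choose j) * p ^ j * (1 - p) ^ (n - j)"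
      unfolding e by simp
  qed simp
  finally show ?thesis unfolding binom_cdf_def .
qed



lemma gen_max_ge:
  fixes xs :: "real list"
  assumes r: "1 \<le> r" "r \<le> length xs" and cnt: "r \<le> length (filter (\<lambda>v. t \<le> v) xs)"
  shows "t \<le> gen_max r xs"
proof (rule ccontr)
  assume neg: "\<not> t \<le> gen_max r xs"
  let ?ys = "rev (sort xs)"
  have len: "length ?ys = length xs" by simp
  have drop_lt: "\<forall>v\<in>set (drop (r - 1) ?ys). v < t"
  proof
    fix v assume "v \<in> set (drop (r - 1) ?ys)"
    then obtain j where j: "j < length (drop (r-1) ?ys)" "v = drop (r-1) ?ys ! j"
      by (auto simp: in_set_conv_nth)
    have jj: "r - 1 + j < length xs" using j by simp
    have v: "v = ?ys ! (r - 1 + j)" using j r by simp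
    have e1: "?ys ! (r - 1 + j) = sort xs ! (length xs - Suc (r - 1 + j))" using jj by (simp add: rev_nth)
    have e2: "?ys ! (r - 1) = sort xs ! (length xs - Suc (r - 1))" using jj by (simp add: rev_nth)
    have "?ys ! (r - 1 + j) \<le> ?ys ! (r - 1)"
      unfolding e1 e2 using jj by (intro sorted_nth_mono) auto
    then show "v < t" using neg v unfolding gen_max_def by simp
  qed
  have "length (filter (\<lambda>v. t \<le> v) xs) = length (filter (\<lambda>v. t \<le> v) ?ys)"
  proof -
    have "mset (filter (\<lambda>v. t \<le> v) ?ys) = mset (filter (\<lambda>v. t \<le> v) xs)" by (simp add: mset_filter)
    then show ?thesis by (metis size_mset)
  qed
  also have "length (filter (\<lambda>v. t \<le> v) ?ys) = length (filter (\<lambda>v. t \<le> v) (take (r-1) ?ys))"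
  proof -
    have "filter (\<lambda>v. t \<le> v) (drop (r-1) ?ys) = []"
      using drop_lt by (auto simp: filter_empty_conv not_le)
    then show ?thesis by (metis append_Nil2 append_take_drop_id filter_append)
  qed
  also have "\<dots> \<le> r - 1" by (rule order_trans[OF length_filter_le]) simp
  finally show False using cnt r by simp
qed

lemma rho_bar_props:
  assumes sc: "scalable_classifier X f" and x: "x \<in> X"
  shows "f x (rho_bar f x) = 0" "\<And>t. f x t < 0 \<longleftrightarrow> t < rho_bar f x" "\<And>t. f x t \<le> 0 \<longleftrightarrow> t \<le> rho_bar f x"
proof -
  have cont: "continuous_on UNIV (f x)" and sm: "strict_mono (f x)"
    and lb: "Lim at_bot (\<lambda>\<rho>. ereal (f x \<rho>)) < 0" and ub: "0 < Lim at_top (\<lambda>\<rho>. ereal (f x \<rho>))"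
    using sc x unfolding scalable_classifier_def by auto
  have mono: "mono (f x)" using sm by (rule strict_mono_mono)
  have ex_neg: "\<exists>a. f x a < 0"
  proof (rule ccontr)
    assume "\<not> ?thesis" then have nn: "\<And>a. 0 \<le> f x a" by (simp add: not_less)
    let ?L = "(INF a. ereal (f x a))"
    have tl: "((\<lambda>\<rho>. ereal (f x \<rho>)) \<longlongrightarrow> ?L) at_bot"
    proof (rule order_tendstoI)
      fix y assume "y > ?L"
      then obtain a where a: "ereal (f x a) < y" by (auto simp: INF_less_iff)
      show "\<forall>\<^sub>F \<rho> in at_bot. ereal (f x \<rho>) < y"
        unfolding eventually_at_bot_linorder
        using monoD[OF mono] a by (metis ereal_less_eq(3) le_less_trans)
    next
      fix y assume "y < ?L"
      then show "\<forall>\<^sub>F \<rho> in at_bot. y < ereal (f x \<rho>)"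
        by (intro always_eventually allI) (rule less_INF_D, auto)
    qed
    have "Lim at_bot (\<lambda>\<rho>. ereal (f x \<rho>)) = ?L" using tl by (intro tendsto_Lim) auto
    moreover have "0 \<le> ?L" using nn by (auto intro!: INF_greatest)
    ultimately show False using lb by simp
  qed
  have ex_pos: "\<exists>b. f x b > 0"
  proof (rule ccontr)
    assume "\<not> ?thesis" then have nn: "\<And>a. f x a \<le> 0" by (simp add: not_less)
    let ?L = "(SUP a. ereal (f x a))"
    have tl: "((\<lambda>\<rho>. ereal (f x \<rho>)) \<longlongrightarrow> ?L) at_top"
    proof (rule order_tendstoI)
      fix y assume "y < ?L"
      then obtain a where a: "y < ereal (f x a)" by (auto simp: less_SUP_iff)
      show "\<forall>\<^sub>F \<rho> in at_top. y < ereal (f x \<rho>)"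
        unfolding eventually_at_top_linorder
        using monoD[OF mono] a by (metis ereal_less_eq(3) less_le_trans)
    next
      fix y assume "y > ?L"
      then show "\<forall>\<^sub>F \<rho> in at_top. ereal (f x \<rho>) < y"
        by (intro always_eventually allI) (meson SUP_upper UNIV_I le_less_trans)
    qed
    have "Lim at_top (\<lambda>\<rho>. ereal (f x \<rho>)) = ?L" using tl by (intro tendsto_Lim) auto
    moreover have "?L \<le> 0" using nn by (auto intro!: SUP_least)
    ultimately show False using ub by simp
  qed
  obtain a b where ab: "f x a < 0" "f x b > 0" using ex_neg ex_pos by auto
  have ab_le: "a \<le> b"
  proof (rule ccontr)
    assume "\<not> a \<le> b" then have "b < a" by simp
    then have "f x b < f x a" using strict_mono_less[OF sm] by simp
    then show False using ab by simp
  qed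
  moreover have ic: "\<And>z. isCont (f x) z" using cont by (simp add: continuous_on_eq_continuous_at)
  have "\<exists>c. a \<le> c \<and> c \<le> b \<and> f x c = 0"
    by (rule IVT) (use ab ic ab_le in auto)
  then obtain c where c: "f x c = 0" by blast
  have uniq: "\<And>d. f x d = 0 \<Longrightarrow> d = c"
  proof -
    fix d assume "f x d = 0" then have "f x d = f x c" using c by simp
    then show "d = c" by (simp add: strict_mono_eq[OF sm])
  qed
  have rb: "rho_bar f x = c" unfolding rho_bar_def using c uniq by (rule the_equality)
  show "f x (rho_bar f x) = 0" using rb c by simp
  show "\<And>t. f x t < 0 \<longleftrightarrow> t < rho_bar f x"
  proof -
    fix t have "f x t < f x c \<longleftrightarrow> t < c" by (rule strict_mono_less[OF sm])
    then show "f x t < 0 \<longleftrightarrow> t < rho_bar f x" using rb c by simp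
  qed
  show "\<And>t. f x t \<le> 0 \<longleftrightarrow> t \<le> rho_bar f x"
  proof -
    fix t have "f x t \<le> f x c \<longleftrightarrow> t \<le> c" by (rule strict_mono_less_eq[OF sm])
    then show "f x t \<le> 0 \<longleftrightarrow> t \<le> rho_bar f x" using rb c by simp
  qed
qed



lemma measure_PiM_box:
  assumes P: "prob_space P" and fin: "finite I" and F: "\<And>i. i \<in> I \<Longrightarrow> F i \<in> sets P"
  shows "measure (PiM I (\<lambda>_. P)) (PiE I F) = (\<Prod>i\<in>I. measure P (F i))"
proof -
  interpret P: prob_space P by fact
  interpret product_sigma_finite "\<lambda>_. P"
    by (simp add: product_sigma_finite_def P.sigma_finite_measure)
  have "emeasure (PiM I (\<lambda>_. P)) (PiE I F) = (\<Prod>i\<in>I. emeasure P (F i))"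
    using fin F by (rule emeasure_PiM)
  also have "\<dots> = (\<Prod>i\<in>I. ennreal (measure P (F i)))" by (simp add: P.emeasure_eq_measure)
  also have "\<dots> = ennreal (\<Prod>i\<in>I. measure P (F i))" by (rule prod_ennreal) simp
  finally show ?thesis unfolding measure_def by (simp add: prod_nonneg)
qed



lemma bad_set:
  fixes n k :: nat
  assumes P: "prob_space P" and E: "E \<in> sets P"
  defines "B \<equiv> {Z \<in> space (PiM {..<n} (\<lambda>_. P)). card {i\<in>{..<n}. Z i \<in> E} \<le> k}"
  shows "B \<in> sets (PiM {..<n} (\<lambda>_. P))" "measure (PiM {..<n} (\<lambda>_. P)) B = GG n k (measure P E)"
proof -
  interpret P: prob_space P by fact
  let ?M = "PiM {..<n} (\<lambda>_. P)"
  let ?SS = "{S. S \<subseteq> {..<n} \<and> card S \<le> k}"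
  define F where "F S = PiE {..<n} (\<lambda>i. if i \<in> S then E else space P - E)" for S
  have Esp: "E \<subseteq> space P" using E by (rule sets.sets_into_space)
  have Fs: "F S \<in> sets ?M" for S
    unfolding F_def using E by (intro sets_PiM_I_finite) auto
  have Beq: "B = (\<Union>S\<in>?SS. F S)"
  proof (intro equalityI subsetI)
    fix Z assume Z: "Z \<in> B"
    let ?S = "{i\<in>{..<n}. Z i \<in> E}"
    have "Z \<in> F ?S" using Z unfolding B_def F_def by (auto simp: space_PiM PiE_iff)
    moreover have "?S \<in> ?SS" using Z unfolding B_def by auto
    ultimately show "Z \<in> (\<Union>S\<in>?SS. F S)" by blast
  next
    fix Z assume "Z \<in> (\<Union>S\<in>?SS. F S)"
    then obtain S where S: "S \<in> ?SS" "Z \<in> F S" by blast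
    have "Z \<in> space ?M" using S Esp unfolding F_def by (auto simp: space_PiM PiE_iff split: if_splits)
    moreover have "{i\<in>{..<n}. Z i \<in> E} = S"
    proof (intro equalityI subsetI)
      fix i assume i: "i \<in> {i\<in>{..<n}. Z i \<in> E}"
      then have "Z i \<in> (if i \<in> S then E else space P - E)" using S(2) unfolding F_def by (auto simp: PiE_iff)
      then show "i \<in> S" using i by (cases "i \<in> S") auto
    next
      fix i assume i: "i \<in> S"
      then have "i < n" using S(1) by auto
      then have "Z i \<in> (if i \<in> S then E else space P - E)" using S(2) unfolding F_def by (auto simp: PiE_iff)
      then show "i \<in> {i\<in>{..<n}. Z i \<in> E}" using i \<open>i < n\<close> by simp
    qed
    ultimately show "Z \<in> B" using S unfolding B_def by auto
  qed
  have fin: "finite ?SS" by (rule fin_subs)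
  show "B \<in> sets ?M" unfolding Beq using fin Fs by (intro sets.finite_UN) auto
  have disj: "disjoint_family_on F ?SS"
    unfolding disjoint_family_on_def
  proof (intro ballI impI)
    fix S T assume S: "S \<in> ?SS" and T: "T \<in> ?SS" and ne: "S \<noteq> T"
    then obtain i where i: "i \<in> S \<and> i \<notin> T \<or> i \<in> T \<and> i \<notin> S" by blast
    then have "i < n" using S T by auto
    show "F S \<inter> F T = {}"
    proof (rule ccontr)
      assume "F S \<inter> F T \<noteq> {}"
      then obtain Z where "Z \<in> F S" "Z \<in> F T" by blast
      then have "Z i \<in> (if i \<in> S then E else space P - E)" "Z i \<in> (if i \<in> T then E else space P - E)"
        using \<open>i < n\<close> unfolding F_def by (auto simp: PiE_iff)
      then show False using i by auto
    qed
  qed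
  have "measure ?M B = (\<Sum>S\<in>?SS. measure ?M (F S))"
    unfolding Beq
  proof (rule measure_finite_Union[OF fin _ disj])
    show "F ` ?SS \<subseteq> sets ?M" using Fs by auto
    interpret M: prob_space ?M by (intro prob_space_PiM) (rule P)
    show "\<And>S. S \<in> ?SS \<Longrightarrow> emeasure ?M (F S) \<noteq> \<infinity>" by simp
  qed
  also have "\<dots> = (\<Sum>S\<in>?SS. measure P E ^ card S * (1 - measure P E) ^ (n - card S))"
  proof (rule sum.cong[OF refl])
    fix S assume S: "S \<in> ?SS"
    have "measure ?M (F S) = (\<Prod>i\<in>{..<n}. measure P (if i \<in> S then E else space P - E))"
      unfolding F_def using E by (intro measure_PiM_box P) auto
    also have "\<dots> = (\<Prod>i\<in>{..<n}. if i \<in> S then measure P E else 1 - measure P E)"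
      using E by (intro prod.cong refl) (simp add: P.prob_compl)
    also have "\<dots> = (\<Prod>i\<in>{..<n} \<inter> {x. x \<in> S}. measure P E) * (\<Prod>i\<in>{..<n} \<inter> - {x. x \<in> S}. 1 - measure P E)"
      by (rule prod.If_cases) simp
    also have "{..<n} \<inter> {x. x \<in> S} = S" using S by auto
    also have "{..<n} \<inter> - {x. x \<in> S} = {..<n} - S" by auto
    finally have eq: "measure ?M (F S) = (\<Prod>i\<in>S. measure P E) * (\<Prod>i\<in>{..<n} - S. 1 - measure P E)" .
    have "card ({..<n} - S) = n - card S" using S by (subst card_Diff_subset) (auto intro: finite_subset)
    then show "measure ?M (F S) = measure P E ^ card S * (1 - measure P E) ^ (n - card S)"
      unfolding eq by simp
  qed
  finally show "measure ?M B = GG n k (measure P E)" unfolding GG_def .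
qed



theorem theorem1:
  fixes MX :: "'a measure" and P :: "('a \<times> int) measure"
    and f :: "'a \<Rightarrow> real \<Rightarrow> real"
    and nc r :: nat and eps \<delta> :: real
  assumes "prob_space P"
    and "sets P = sets (MX \<Otimes>\<^sub>M count_space {-1, 1})"
    and "scalable_classifier (space MX) f"
    and "\<And>\<rho>. (\<lambda>x. f x \<rho>) \<in> borel_measurable MX"
    and "0 < eps" "eps < 1" "0 < \<delta>" "\<delta> < 1"
    and "1 \<le> r" "r \<le> nc"
    and "binom_cdf (r - 1) nc eps \<le> \<delta>"
  shows "\<exists>A \<in> sets (PiM {..<nc} (\<lambda>_. P)).
           measure (PiM {..<nc} (\<lambda>_. P)) A \<ge> 1 - \<delta> \<and>
           (\<forall>Z\<in>A. measure P {z \<in> space P. snd z = -1 \<and> fst z \<in> S_eps (space MX) f r nc Z} \<le> eps)"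
proof -
  interpret P: prob_space P by fact
  let ?M = "PiM {..<nc} (\<lambda>_. P)"
  interpret M: prob_space ?M by (intro prob_space_PiM) (rule assms(1))
  have spP: "space P = space MX \<times> {-1, 1}"
    using sets_eq_imp_space_eq[OF assms(2)] by (simp add: space_pair_measure)
  have fstm: "fst \<in> P \<rightarrow>\<^sub>M MX"
    by (subst measurable_cong_sets[OF assms(2) refl]) (rule measurable_fst)
  have sndm: "snd \<in> P \<rightarrow>\<^sub>M count_space {-1, 1}"
    by (subst measurable_cong_sets[OF assms(2) refl]) (rule measurable_snd)
  have fm: "(\<lambda>z. f (fst z) t) \<in> borel_measurable P" for t
    using measurable_comp[OF fstm assms(4)[of t]] by (simp add: comp_def)
  define R where "R z = rho_bar f (fst z)" for z :: "'a \<times> int"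
  have Rprops: "f (fst z) t < 0 \<longleftrightarrow> t < R z" "f (fst z) t \<le> 0 \<longleftrightarrow> t \<le> R z" if "z \<in> space P" for z t
    using rho_bar_props[OF assms(3), of "fst z"] that spP unfolding R_def by auto
  define N where "N = {z\<in>space P. snd z = -1}"
  define Lt where "Lt t = {z\<in>space P. snd z = -1 \<and> t < R z}" for t
  define Le where "Le t = {z\<in>space P. snd z = -1 \<and> t \<le> R z}" for t
  have Nm: "N \<in> sets P"
  proof -
    have "snd -` {-1} \<inter> space P \<in> sets P" by (rule measurable_sets[OF sndm]) simp
    moreover have "snd -` {-1} \<inter> space P = N" unfolding N_def by auto
    ultimately show ?thesis by simp
  qed
  have Ltm: "Lt t \<in> sets P" for t
  proof -
    have "(\<lambda>z. f (fst z) t) -` {..<0} \<inter> space P \<in> sets P" by (rule measurable_sets[OF fm]) simp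
    then have "N \<inter> ((\<lambda>z. f (fst z) t) -` {..<0} \<inter> space P) \<in> sets P" using Nm by auto
    moreover have "N \<inter> ((\<lambda>z. f (fst z) t) -` {..<0} \<inter> space P) = Lt t"
      unfolding N_def Lt_def using Rprops by auto
    ultimately show ?thesis by simp
  qed
  have Lem: "Le t \<in> sets P" for t
  proof -
    have "(\<lambda>z. f (fst z) t) -` {..0} \<inter> space P \<in> sets P" by (rule measurable_sets[OF fm]) simp
    then have "N \<inter> ((\<lambda>z. f (fst z) t) -` {..0} \<inter> space P) \<in> sets P" using Nm by auto
    moreover have "N \<inter> ((\<lambda>z. f (fst z) t) -` {..0} \<inter> space P) = Le t"
      unfolding N_def Le_def using Rprops by auto
    ultimately show ?thesis by simp
  qed
  show ?thesis
  proof (cases "measure P N \<le> eps")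
    case True
    show ?thesis
    proof (intro bexI conjI ballI)
      show "space ?M \<in> sets ?M" by simp
      show "1 - \<delta> \<le> measure ?M (space ?M)" using assms M.prob_space by simp
      fix Z
      have "measure P {z \<in> space P. snd z = -1 \<and> fst z \<in> S_eps (space MX) f r nc Z} \<le> measure P N"
        using Nm unfolding N_def by (intro P.finite_measure_mono) auto
      then show "measure P {z \<in> space P. snd z = -1 \<and> fst z \<in> S_eps (space MX) f r nc Z} \<le> eps"
        using True by simp
    qed
  next
    case False
    then have Nbig: "eps < measure P N" by simp
    define g where "g t = measure P (Lt t)" for t
    have g_anti: "g t \<le> g s" if "s \<le> t" for s t
      unfolding g_def using that Ltm by (intro P.finite_measure_mono) (auto simp: Lt_def)
    define T where "T = {t. eps < g t}"
    have T_ne: "T \<noteq> {}"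
    proof -
      have "(\<lambda>n. measure P (Lt (- real n))) \<longlonglongrightarrow> measure P (\<Union>n. Lt (- real n))"
        using Ltm by (intro Lim_measure_incseq) (auto simp: incseq_def Lt_def)
      moreover have "(\<Union>n. Lt (- real n)) = N"
      proof (intro equalityI subsetI)
        fix z assume z: "z \<in> N"
        obtain n :: nat where "- R z < real n" using reals_Archimedean2 by blast
        then show "z \<in> (\<Union>n. Lt (- real n))" using z unfolding N_def Lt_def by auto (metis minus_less_iff)
      qed (auto simp: Lt_def N_def)
      ultimately have "(\<lambda>n. g (- real n)) \<longlonglongrightarrow> measure P N" unfolding g_def by simp
      then have "\<forall>\<^sub>F n in sequentially. eps < g (- real n)" using Nbig by (rule order_tendstoD)
      then obtain n where "eps < g (- real n)" by (auto simp: eventually_sequentially)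
      then show ?thesis unfolding T_def by blast
    qed
    obtain n1 :: nat where n1: "g (real n1) < eps"
    proof -
      have "(\<lambda>n. measure P (Lt (real n))) \<longlonglongrightarrow> measure P (\<Inter>n. Lt (real n))"
        using Ltm by (intro Lim_measure_decseq) (auto simp: decseq_def Lt_def)
      moreover have "(\<Inter>n. Lt (real n)) = {}"
      proof (intro equalityI subsetI)
        fix z assume z: "z \<in> (\<Inter>n. Lt (real n))"
        obtain n :: nat where "R z < real n" using reals_Archimedean2 by blast
        moreover have "z \<in> Lt (real n)" using z by blast
        ultimately show "z \<in> {}" unfolding Lt_def by auto
      qed auto
      ultimately have "(\<lambda>n. g (real n)) \<longlonglongrightarrow> 0" unfolding g_def by simp
      then have "\<forall>\<^sub>F n in sequentially. g (real n) < eps" using assms(5) by (rule order_tendstoD)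
      then show ?thesis using that by (auto simp: eventually_sequentially)
    qed
    have T_bdd: "bdd_above T"
    proof (rule bdd_aboveI)
      fix t assume t: "t \<in> T"
      show "t \<le> real n1"
      proof (rule ccontr)
        assume "\<not> t \<le> real n1"
        then have "g t \<le> g (real n1)" by (intro g_anti) simp
        then show False using t n1 unfolding T_def by simp
      qed
    qed
    define ts where "ts = Sup T"
    have inv_mono: "1 / real (Suc n) \<le> 1 / real (Suc m)" if "m \<le> n" for m n :: nat
      using that by (intro divide_left_mono) auto
    have inc1: "incseq (\<lambda>n. Lt (ts + 1 / Suc n))"
      unfolding incseq_def
    proof (intro allI impI subsetI)
      fix m n z assume "m \<le> n" "z \<in> Lt (ts + 1 / Suc m)"
      then show "z \<in> Lt (ts + 1 / Suc n)" using inv_mono[of m n] unfolding Lt_def by auto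
    qed
    have dec1: "decseq (\<lambda>n. Lt (ts - 1 / Suc n))"
      unfolding decseq_def
    proof (intro allI impI subsetI)
      fix m n z assume "m \<le> n" "z \<in> Lt (ts - 1 / Suc n)"
      then show "z \<in> Lt (ts - 1 / Suc m)" using inv_mono[of m n] unfolding Lt_def by auto
    qed
    have gts: "g ts \<le> eps"
    proof -
      have "(\<lambda>n. measure P (Lt (ts + 1 / Suc n))) \<longlonglongrightarrow> measure P (\<Union>n. Lt (ts + 1 / Suc n))"
        using Ltm inc1 by (intro Lim_measure_incseq) auto
      moreover have "(\<Union>n. Lt (ts + 1 / Suc n)) = Lt ts"
      proof (intro equalityI subsetI)
        fix z assume z: "z \<in> Lt ts"
        then have "0 < R z - ts" unfolding Lt_def by simp
        then obtain n where "inverse (real (Suc n)) < R z - ts" using reals_Archimedean by blast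
        then have "ts + 1 / real (Suc n) < R z" by (simp add: inverse_eq_divide)
        then have "z \<in> Lt (ts + 1 / Suc n)" using z unfolding Lt_def by blast
        then show "z \<in> (\<Union>n. Lt (ts + 1 / Suc n))" by blast
      next
        fix z assume "z \<in> (\<Union>n. Lt (ts + 1 / Suc n))"
        then obtain n where "z \<in> Lt (ts + 1 / Suc n)" by blast
        then have z1: "z \<in> space P" "snd z = -1" "ts + 1 / real (Suc n) < R z" unfolding Lt_def by blast+
        have "0 < 1 / real (Suc n)" by simp
        then have "ts < R z" using z1(3) by linarith
        then show "z \<in> Lt ts" using z1 unfolding Lt_def by blast
      qed
      ultimately have lim: "(\<lambda>n. g (ts + 1 / Suc n)) \<longlonglongrightarrow> g ts" unfolding g_def by simp
      have "g (ts + 1 / Suc n) \<le> eps" for n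
      proof (rule ccontr)
        assume "\<not> g (ts + 1 / Suc n) \<le> eps"
        then have "ts + 1 / Suc n \<in> T" unfolding T_def by simp
        then have "ts + 1 / Suc n \<le> ts" unfolding ts_def using T_bdd by (rule cSup_upper)
        then show False by simp
      qed
      then show ?thesis using lim by (intro LIMSEQ_le_const2) auto
    qed
    define E where "E = Le ts"
    define p where "p = measure P E"
    have pE: "eps \<le> p"
    proof -
      have "(\<lambda>n. measure P (Lt (ts - 1 / Suc n))) \<longlonglongrightarrow> measure P (\<Inter>n. Lt (ts - 1 / Suc n))"
        using Ltm dec1 by (intro Lim_measure_decseq) auto
      moreover have "(\<Inter>n. Lt (ts - 1 / Suc n)) = E"
      proof (intro equalityI subsetI)
        fix z assume z: "z \<in> (\<Inter>n. Lt (ts - 1 / Suc n))"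
        have "ts \<le> R z"
        proof (rule ccontr)
          assume "\<not> ts \<le> R z"
          then have "0 < ts - R z" by simp
          then obtain n where n: "inverse (real (Suc n)) < ts - R z" using reals_Archimedean by blast
          have "z \<in> Lt (ts - 1 / Suc n)" using z by blast
          then have "ts - 1 / real (Suc n) < R z" unfolding Lt_def by blast
          then show False using n by (simp add: inverse_eq_divide)
        qed
        then show "z \<in> E" using z unfolding E_def Le_def Lt_def by auto
      next
        fix z assume "z \<in> E"
        then have z1: "z \<in> space P" "snd z = -1" "ts \<le> R z" unfolding E_def Le_def by blast+
        have "ts - 1 / real (Suc n) < R z" for n
        proof -
          have "0 < 1 / real (Suc n)" by simp
          then show ?thesis using z1(3) by linarith
        qed
        then show "z \<in> (\<Inter>n. Lt (ts - 1 / Suc n))" using z1 unfolding Lt_def by blast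
      qed
      ultimately have lim: "(\<lambda>n. g (ts - 1 / Suc n)) \<longlonglongrightarrow> p" unfolding g_def p_def by simp
      have "eps \<le> g (ts - 1 / Suc n)" for n
      proof -
        have "ts - 1 / Suc n < Sup T" unfolding ts_def[symmetric] by simp
        then obtain t where t: "t \<in> T" "ts - 1 / Suc n < t" using less_cSup_iff[OF T_ne T_bdd] by blast
        then have "g t \<le> g (ts - 1 / Suc n)" by (intro g_anti) simp
        then show ?thesis using t unfolding T_def by simp
      qed
      then show ?thesis using lim by (intro LIMSEQ_le_const) auto
    qed
    have Em: "E \<in> sets P" unfolding E_def by (rule Lem)
    have p1: "p \<le> 1" unfolding p_def by simp
    define B where "B = {Z \<in> space ?M. card {i\<in>{..<nc}. Z i \<in> E} \<le> r - 1}"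
    have Bm: "B \<in> sets ?M"
      unfolding B_def by (rule bad_set(1)[OF assms(1) Em])
    have mB: "measure ?M B = GG nc (r - 1) p"
      unfolding B_def p_def by (rule bad_set(2)[OF assms(1) Em])
    have "measure ?M B \<le> \<delta>"
    proof -
      have "GG nc (r - 1) p \<le> GG nc (r - 1) eps" using pE p1 assms(5) by (intro GG_anti) auto
      then show ?thesis using mB assms(11) GG_binom[of nc "r - 1" eps] by simp
    qed
    show ?thesis
    proof (intro bexI conjI ballI)
      show "space ?M - B \<in> sets ?M" using Bm by auto
      show "1 - \<delta> \<le> measure ?M (space ?M - B)"
        using M.prob_compl[OF Bm] \<open>measure ?M B \<le> \<delta>\<close> by simp
      fix Z assume Z: "Z \<in> space ?M - B"
      then have Zsp: "Z i \<in> space P" if "i < nc" for i using that by (auto simp: space_PiM PiE_iff)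
      have cnt: "r \<le> card {i\<in>{..<nc}. Z i \<in> E}" using Z unfolding B_def by auto
      define xs where "xs = map (rho_bar f) (neg_features nc Z)"
      have lf: "length (filter (\<lambda>v. ts \<le> v) xs) = card {i. i < nc \<and> snd (Z i) = -1 \<and> ts \<le> R (Z i)}"
        unfolding xs_def neg_features_def R_def
        by (simp add: filter_map filter_filter comp_def length_filter_conv_card) (intro arg_cong[where f=card] Collect_cong, auto)
      have "{i\<in>{..<nc}. Z i \<in> E} \<subseteq> {i. i < nc \<and> snd (Z i) = -1 \<and> ts \<le> R (Z i)}"
        unfolding E_def Le_def by auto
      then have "card {i\<in>{..<nc}. Z i \<in> E} \<le> length (filter (\<lambda>v. ts \<le> v) xs)"
        unfolding lf by (intro card_mono) auto
      then have cxs: "r \<le> length (filter (\<lambda>v. ts \<le> v) xs)" using cnt by simp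
      then have lxs: "r \<le> length xs" using length_filter_le[of "\<lambda>v. ts \<le> v" xs] by linarith
      have gm: "ts \<le> gen_max r xs" by (rule gen_max_ge[OF assms(9) lxs cxs])
      have lnf: "r \<le> length (neg_features nc Z)" using lxs unfolding xs_def by simp
      have "{z \<in> space P. snd z = -1 \<and> fst z \<in> S_eps (space MX) f r nc Z} \<subseteq> Lt ts"
      proof
        fix z assume z: "z \<in> {z \<in> space P. snd z = -1 \<and> fst z \<in> S_eps (space MX) f r nc Z}"
        then have "f (fst z) (gen_max r xs) < 0"
          using lnf unfolding S_eps_def xs_def by auto
        then have "gen_max r xs < R z" using Rprops z by auto
        then show "z \<in> Lt ts" using z gm unfolding Lt_def by auto
      qed
      then have "measure P {z \<in> space P. snd z = -1 \<and> fst z \<in> S_eps (space MX) f r nc Z} \<le> g ts"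
        unfolding g_def using Ltm by (intro P.finite_measure_mono) auto
      then show "measure P {z \<in> space P. snd z = -1 \<and> fst z \<in> S_eps (space MX) f r nc Z} \<le> eps"
        using gts by simp
    qed
  qed
qed

end
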